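(* Under the setting and assumptions (M), (A1)–(A4) described in the context, fix a query feature $s\in S$ and a query datacube $h_q\in\mathcal H$. Suppose $\liminf_{NT\to\infty} E[\hat f(s,h_q)]>0$. Then the kernel estimator is consistent: $\hat g(s,h_q)\to g(s,h_q)$ in probability as $NT\to\infty$.
   Context: Setting. For each $N$ (number of nodes) and $T$ (number of timesteps) one observes random directed graphs $G_1,\dots,G_T$ on the vertex set $\{1,\dots,N\}$; $p\ge 1$ is a fixed lag, constant with respect to $N,T$. The local neighborhood $N_t(i)$ of node $i$ in $G_t$ is the set of nodes within 2 hops of $i$ together with all edges among them. Each node pair $(i,j)$ at time $t$ carries a pair-feature $g_t(i,j)$ taking values in a fixed finite set $S$. For $s\in S$, let $n_{i,t}(s)$ be the number of node pairs in $N_t(i)$ with pair-feature $s$ at time $t$, and $n^+_{i,t}(s)$ the number of those pairs that are joined by an edge at time $t+1$. The datacube of $i$ at time $t$ is $h_{i,t}=\{(n_{i,t-1}(s),n^+_{i,t-1}(s)):s\in S\}$; it summarizes the evolution of the neighborhood of $i$ from $t-1$ to $t$. Model (M): there is an unknown function $g:S\times\mathcal H\to[0,1]$ such that for all $i,t,s$: $E[n^+_{i,t+1}(s)\mid h_{i,t},\,n_{i,t+1}(s)] = n_{i,t+1}(s)\,g(s,h_{i,t})$. (This follows from the model that each edge indicator $Y_{t+1}(i,j)$ is, given the graph history, Bernoulli with parameter $g(g_t(i,j),h_{i,t})$.) Kernel: $K_b(h,h')=b^{D(h,h')}$ with bandwidth $0<b<1$, where $D\ge 0$ is the distance $D(h,h')=\sum_{s\in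 S}\mathrm{TV}\big(\mathcal N(\hat p_s,\hat p_s(1-\hat p_s)/n(s)),\mathcal N(\hat p'_s,\hat p'_s(1-\hat p'_s)/n'(s))\big)$, $\hat p_s=n^+(s)/n(s)$, TV the total variation distance; it is assumed that $D(h,h')=0$ iff $h=h'$, so that $\lim_{b\to 0}K_b(h,h')=1$ if $h=h'$ and $0$ otherwise. Estimator for query feature $s$ and query datacube $h_q$: $\hat h(s,h_q)=\frac{1}{N(T-p-2)}\sum_{t=p}^{T-2}\sum_{i=1}^N K_b(h_{i,t},h_q)\,n^+_{i,t+1}(s)$, $\hat f(s,h_q)=\frac{1}{N(T-p-2)}\sum_{t=p}^{T-2}\sum_{i=1}^N K_b(h_{i,t},h_q)\,n_{i,t+1}(s)$, and $\hat g(s,h_q)=\hat h(s,h_q)/\hat f(s,h_q)$ (defined when $\hat f>0$). (A1) Finite dimensionality: there is a constant $M$ independent of $N,T$ bounding all neighborhood sizes; hence all datacubes $h_{i,t}$ and counts $n_{i,t}(s),n^+_{i,t}(s)$ take values in a fixed finite set ($\mathcal H$ denotes the finite set of possible datacubes), independent of $N,T$. (A2) Bandwidth convergence: $b=b_{N,T}\to 0$ as $NT\to\infty$. Stacked graph and distance: form the graph obtained by stacking $G_1,\dots,G_T$ and joining each node $i$ at time $t$ to node $i$ at times $t-1$ and $t+1$. For index pairs $(i,t),(i',t')$, let $\mathrm{dist}((i,t),(i',t'))$ be the length of the shortest path in the stacked graph between any node of the datacube of $(i,t)$ and any node of the datacube of $(i',t')$ (it is $0$ when they share nodes). (A3) Strong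 mixing: with $\mathcal F(i,t)$ the sigma-algebra generated by the random variables in the datacube of $(i,t)$ (including the associated counts $n_{i,t+1},n^+_{i,t+1}$), let $\alpha(k)=\sup\{|P(A\cap B)-P(A)P(B)|: A\in\mathcal F(i,t),B\in\mathcal F(i',t'),\ \mathrm{dist}((i,t),(i',t'))\ge k\}$, with $\alpha$ not depending on $N,T$; assume $\sum_{k=1}^\infty \alpha(k)k^{\rho-1}<\infty$, where $\rho$ is the intrinsic dimensionality of the graphs, a constant independent of $N,T$. (A4) Growth (a consequence of bounded intrinsic dimensionality $\rho$, 2-hop neighborhoods and constant lag $p$): there is a constant $C$ independent of $N,T$ such that for every $(i,t)$ the number of index pairs $(i',t')$ with $\mathrm{dist}((i,t),(i',t'))=0$ is at most $C$, and the number with $\mathrm{dist}((i,t),(i',t'))=d$ is at most $C d^{\rho-1}$ for every $d\ge 1$. *)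

theory Defs
  imports "HOL-Probability.Probability"
begin

text \<open>Datacubes are functions from the finite feature set (a finite type 's) to pairs
 (n(s), n+(s)).  For fixed (N,T), cnt i t s w is n_{i,t}(s) and cntp i t s w is n+_{i,t}(s).\<close>

type_synonym 's datacube = "'s \<Rightarrow> nat \<times> nat"

definition datacube ::
  "(nat \<Rightarrow> nat \<Rightarrow> 's \<Rightarrow> 'a \<Rightarrow> nat) \<Rightarrow> (nat \<Rightarrow> nat \<Rightarrow> 's \<Rightarrow> 'a \<Rightarrow> nat)
   \<Rightarrow> nat \<Rightarrow> nat \<Rightarrow> 'a \<Rightarrow> 's datacube" where
  "datacube cnt cntp i t w = (\<lambda>s. (cnt i (t - 1) s w, cntp i (t - 1) s w))"

definition kernel :: "('s datacube \<Rightarrow> 's datacube \<Rightarrow> real) \<Rightarrow> real \<Rightarrow> 's datacube \<Rightarrow> 's datacube \<Rightarrow> real" where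
  "kernel D b h h' = b powr D h h'"

definition h_hat ::
  "('s datacube \<Rightarrow> 's datacube \<Rightarrow> real) \<Rightarrow> real \<Rightarrow> nat \<Rightarrow> nat \<Rightarrow> nat
   \<Rightarrow> (nat \<Rightarrow> nat \<Rightarrow> 's \<Rightarrow> 'a \<Rightarrow> nat) \<Rightarrow> (nat \<Rightarrow> nat \<Rightarrow> 's \<Rightarrow> 'a \<Rightarrow> nat)
   \<Rightarrow> 's \<Rightarrow> 's datacube \<Rightarrow> 'a \<Rightarrow> real" where
  "h_hat D b p N T cnt cntp s hq w =
     (1 / (real N * (real T - real p - 2))) *
     (\<Sum>t\<in>{p..T-2}. \<Sum>i\<in>{1..N}. kernel D b (datacube cnt cntp i t w) hq * real (cntp i (t + 1) s w))"

definition f_hat ::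
  "('s datacube \<Rightarrow> 's datacube \<Rightarrow> real) \<Rightarrow> real \<Rightarrow> nat \<Rightarrow> nat \<Rightarrow> nat
   \<Rightarrow> (nat \<Rightarrow> nat \<Rightarrow> 's \<Rightarrow> 'a \<Rightarrow> nat) \<Rightarrow> (nat \<Rightarrow> nat \<Rightarrow> 's \<Rightarrow> 'a \<Rightarrow> nat)
   \<Rightarrow> 's \<Rightarrow> 's datacube \<Rightarrow> 'a \<Rightarrow> real" where
  "f_hat D b p N T cnt cntp s hq w =
     (1 / (real N * (real T - real p - 2))) *
     (\<Sum>t\<in>{p..T-2}. \<Sum>i\<in>{1..N}. kernel D b (datacube cnt cntp i t w) hq * real (cnt i (t + 1) s w))"

text \<open>g_hat = h_hat / f_hat (Isabelle's x / 0 = 0 convention on the event f_hat = 0).\<close>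
definition g_hat ::
  "('s datacube \<Rightarrow> 's datacube \<Rightarrow> real) \<Rightarrow> real \<Rightarrow> nat \<Rightarrow> nat \<Rightarrow> nat
   \<Rightarrow> (nat \<Rightarrow> nat \<Rightarrow> 's \<Rightarrow> 'a \<Rightarrow> nat) \<Rightarrow> (nat \<Rightarrow> nat \<Rightarrow> 's \<Rightarrow> 'a \<Rightarrow> nat)
   \<Rightarrow> 's \<Rightarrow> 's datacube \<Rightarrow> 'a \<Rightarrow> real" where
  "g_hat D b p N T cnt cntp s hq w =
     h_hat D b p N T cnt cntp s hq w / f_hat D b p N T cnt cntp s hq w"

definition idx :: "nat \<Rightarrow> nat \<Rightarrow> nat \<Rightarrow> (nat \<times> nat) set" where
  "idx p N T = {1..N} \<times> {p..T-2}"

text \<open>The limit NT \<rightarrow> \<infinity>, over those (N,T) for which the estimator is defined (T - p - 2 > 0).\<close>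
definition NT_limit :: "nat \<Rightarrow> (nat \<times> nat) filter" where
  "NT_limit p = inf (filtercomap (\<lambda>(N, T). N * T) at_top) (principal {(N, T). p + 2 < T})"

definition conv_in_prob :: "'i filter \<Rightarrow> ('i \<Rightarrow> 'a measure) \<Rightarrow> ('i \<Rightarrow> 'a \<Rightarrow> real) \<Rightarrow> real \<Rightarrow> bool" where
  "conv_in_prob F M X c \<longleftrightarrow>
     (\<forall>e>0. ((\<lambda>x. measure (M x) {w \<in> space (M x). \<bar>X x w - c\<bar> > e}) \<longlongrightarrow> 0) F)"

end

theory Submission
  imports Defs
begin
lemma simple_repr:
  fixes \<phi> :: "'z \<Rightarrow> real"
  assumes "finite W" "Z w \<in> W" "w \<in> S"
  shows "\<phi> (Z w) = (\<Sum>z\<in>W. \<phi> z * indicator {w'\<in>S. Z w' = z} w)"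
proof -
  have "(\<Sum>z\<in>W. \<phi> z * indicator {w'\<in>S. Z w' = z} w) = (\<Sum>z\<in>W. if z = Z w then \<phi> z else 0)"
    using assms by (intro sum.cong) (auto simp: indicator_def)
  also have "\<dots> = \<phi> (Z w)" using assms by (simp add: sum.delta')
  finally show ?thesis by simp
qed

lemma meas_simple:
  fixes \<phi> :: "'z \<Rightarrow> real"
  assumes "finite W" "\<And>w. w \<in> space M \<Longrightarrow> Z w \<in> W" "\<And>z. {w\<in>space M. Z w = z} \<in> sets M"
  shows "(\<lambda>w. \<phi> (Z w)) \<in> borel_measurable M"
proof -
  have "(\<lambda>w. \<Sum>z\<in>W. \<phi> z * indicator {w'\<in>space M. Z w' = z} w) \<in> borel_measurable M"
    using assms(3) by (intro borel_measurable_sum borel_measurable_times borel_measurable_const borel_measurable_indicator) auto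
  then show ?thesis
    by (rule measurable_cong[THEN iffD1, rotated]) (use simple_repr[where W=W and Z=Z and S="space M" and \<phi>=\<phi>] assms(1,2) in auto)
qed

lemma exp_simple:
  fixes \<phi> :: "'z \<Rightarrow> real"
  assumes "prob_space M" "finite W" "\<And>w. w \<in> space M \<Longrightarrow> Z w \<in> W" "\<And>z. {w\<in>space M. Z w = z} \<in> sets M"
  shows "(\<integral>w. \<phi> (Z w) \<partial>M) = (\<Sum>z\<in>W. \<phi> z * measure M {w\<in>space M. Z w = z})"
proof -
  interpret prob_space M by fact
  have "(\<integral>w. \<phi> (Z w) \<partial>M) = (\<integral>w. (\<Sum>z\<in>W. \<phi> z * indicator {w'\<in>space M. Z w' = z} w) \<partial>M)"
    by (rule Bochner_Integration.integral_cong[OF refl]) (use simple_repr[where W=W and Z=Z and S="space M" and \<phi>=\<phi>] assms(2,3) in auto)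
  also have "\<dots> = (\<Sum>z\<in>W. \<phi> z * measure M {w\<in>space M. Z w = z})"
    using assms(4) by (subst Bochner_Integration.integral_sum) (auto intro!: integrable_mult_right integrable_real_indicator simp: Bochner_Integration.integral_mult_right less_top[symmetric])
  finally show ?thesis .
qed

lemma exp_simple2:
  fixes \<phi> \<psi> :: "'z \<Rightarrow> real"
  assumes "prob_space M" "finite W" "\<And>w. w \<in> space M \<Longrightarrow> Z1 w \<in> W" "\<And>z. {w\<in>space M. Z1 w = z} \<in> sets M"
    "\<And>w. w \<in> space M \<Longrightarrow> Z2 w \<in> W" "\<And>z. {w\<in>space M. Z2 w = z} \<in> sets M"
  shows "(\<integral>w. \<phi> (Z1 w) * \<psi> (Z2 w) \<partial>M) = (\<Sum>z1\<in>W. \<Sum>z2\<in>W. \<phi> z1 * \<psi> z2 *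
      measure M ({w\<in>space M. Z1 w = z1} \<inter> {w\<in>space M. Z2 w = z2}))"
proof -
  interpret prob_space M by fact
  have "(\<integral>w. \<phi> (Z1 w) * \<psi> (Z2 w) \<partial>M) = (\<integral>w. (\<Sum>z1\<in>W. \<Sum>z2\<in>W. \<phi> z1 * \<psi> z2 *
      indicator ({w'\<in>space M. Z1 w' = z1} \<inter> {w'\<in>space M. Z2 w' = z2}) w) \<partial>M)"
  proof (rule Bochner_Integration.integral_cong[OF refl])
    fix w assume w: "w \<in> space M"
    have "\<phi> (Z1 w) * \<psi> (Z2 w) = (\<Sum>z1\<in>W. \<phi> z1 * indicator {w'\<in>space M. Z1 w' = z1} w) *
       (\<Sum>z2\<in>W. \<psi> z2 * indicator {w'\<in>space M. Z2 w' = z2} w)"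
      using simple_repr[where Z=Z1 and W=W and S="space M" and \<phi>=\<phi>, OF assms(2) assms(3)[OF w] w] simple_repr[where Z=Z2 and W=W and S="space M" and \<phi>=\<psi>, OF assms(2) assms(5)[OF w] w] by metis
    also have "\<dots> = (\<Sum>z1\<in>W. \<Sum>z2\<in>W. \<phi> z1 * \<psi> z2 *
      indicator ({w'\<in>space M. Z1 w' = z1} \<inter> {w'\<in>space M. Z2 w' = z2}) w)"
      by (simp add: sum_product indicator_inter_arith mult_ac)
    finally show "\<phi> (Z1 w) * \<psi> (Z2 w) = \<dots>" .
  qed
  also have "\<dots> = (\<Sum>z1\<in>W. \<Sum>z2\<in>W. \<phi> z1 * \<psi> z2 *
      measure M ({w\<in>space M. Z1 w = z1} \<inter> {w\<in>space M. Z2 w = z2}))"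
  proof -
    have int: "\<And>A. A \<in> sets M \<Longrightarrow> integrable M (indicat_real A)" by (simp add: less_top[symmetric])
    have ev: "\<And>z1 z2. {w\<in>space M. Z1 w = z1} \<inter> {w\<in>space M. Z2 w = z2} \<in> sets M"
      using assms(4,6) by blast
    show ?thesis
      apply (subst Bochner_Integration.integral_sum)
       apply (intro Bochner_Integration.integrable_sum Bochner_Integration.integrable_mult_right int ev)
      apply (rule sum.cong[OF refl])
      apply (subst Bochner_Integration.integral_sum)
       apply (intro Bochner_Integration.integrable_mult_right int ev)
      apply (rule sum.cong[OF refl])
      apply (subst Bochner_Integration.integral_mult_right)
       apply (rule int, rule ev)
      using ev by simp
  qed
  finally show ?thesis .
qed

lemma cov_bound:
  fixes \<phi> \<psi> :: "'z \<Rightarrow> real"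
  assumes P: "prob_space M" and W: "finite W" and Z1W: "\<And>w. w \<in> space M \<Longrightarrow> Z1 w \<in> W"
    and E1: "\<And>z. {w\<in>space M. Z1 w = z} \<in> sets M"
    and Z2W: "\<And>w. w \<in> space M \<Longrightarrow> Z2 w \<in> W" and E2: "\<And>z. {w\<in>space M. Z2 w = z} \<in> sets M"
    and pB: "\<And>z. z \<in> W \<Longrightarrow> \<bar>\<phi> z\<bar> \<le> B" and qB: "\<And>z. z \<in> W \<Longrightarrow> \<bar>\<psi> z\<bar> \<le> B"
    and mix: "\<And>z1 z2. \<bar>measure M ({w\<in>space M. Z1 w = z1} \<inter> {w\<in>space M. Z2 w = z2})
        - measure M {w\<in>space M. Z1 w = z1} * measure M {w\<in>space M. Z2 w = z2}\<bar> \<le> a"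
  shows "\<bar>(\<integral>w. \<phi> (Z1 w) * \<psi> (Z2 w) \<partial>M) - (\<integral>w. \<phi> (Z1 w) \<partial>M) * (\<integral>w. \<psi> (Z2 w) \<partial>M)\<bar>
     \<le> real (card W) ^ 2 * B ^ 2 * a"
proof -
  let ?P = "\<lambda>z1 z2. measure M ({w\<in>space M. Z1 w = z1} \<inter> {w\<in>space M. Z2 w = z2})"
  let ?P1 = "\<lambda>z1. measure M {w\<in>space M. Z1 w = z1}"
  let ?P2 = "\<lambda>z2. measure M {w\<in>space M. Z2 w = z2}"
  have "(\<integral>w. \<phi> (Z1 w) * \<psi> (Z2 w) \<partial>M) - (\<integral>w. \<phi> (Z1 w) \<partial>M) * (\<integral>w. \<psi> (Z2 w) \<partial>M)
     = (\<Sum>z1\<in>W. \<Sum>z2\<in>W. \<phi> z1 * \<psi> z2 * ?P z1 z2) - (\<Sum>z1\<in>W. \<phi> z1 * ?P1 z1) * (\<Sum>z2\<in>W. \<psi> z2 * ?P2 z2)"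
    using exp_simple2[OF P W Z1W E1 Z2W E2, of \<phi> \<psi>] exp_simple[OF P W Z1W E1, of \<phi>] exp_simple[OF P W Z2W E2, of \<psi>]
    by simp
  also have "\<dots> = (\<Sum>z1\<in>W. \<Sum>z2\<in>W. \<phi> z1 * \<psi> z2 * (?P z1 z2 - ?P1 z1 * ?P2 z2))"
    by (simp add: sum_product sum_subtractf[symmetric] algebra_simps)
  finally have eq: "(\<integral>w. \<phi> (Z1 w) * \<psi> (Z2 w) \<partial>M) - (\<integral>w. \<phi> (Z1 w) \<partial>M) * (\<integral>w. \<psi> (Z2 w) \<partial>M)
     = (\<Sum>z1\<in>W. \<Sum>z2\<in>W. \<phi> z1 * \<psi> z2 * (?P z1 z2 - ?P1 z1 * ?P2 z2))" .
  have "\<bar>\<Sum>z1\<in>W. \<Sum>z2\<in>W. \<phi> z1 * \<psi> z2 * (?P z1 z2 - ?P1 z1 * ?P2 z2)\<bar>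
      \<le> (\<Sum>z1\<in>W. \<Sum>z2\<in>W. \<bar>\<phi> z1 * \<psi> z2 * (?P z1 z2 - ?P1 z1 * ?P2 z2)\<bar>)"
    by (rule order.trans[OF sum_abs], rule sum_mono, rule sum_abs)
  also have "\<dots> \<le> (\<Sum>z1\<in>W. \<Sum>z2\<in>W. B * B * a)"
  proof (intro sum_mono)
    fix z1 z2 assume z: "z1 \<in> W" "z2 \<in> W"
    have "\<bar>\<phi> z1 * \<psi> z2 * (?P z1 z2 - ?P1 z1 * ?P2 z2)\<bar> = \<bar>\<phi> z1\<bar> * \<bar>\<psi> z2\<bar> * \<bar>?P z1 z2 - ?P1 z1 * ?P2 z2\<bar>"
      by (simp add: abs_mult)
    also have "\<dots> \<le> B * B * a"
      using pB[OF z(1)] qB[OF z(2)] mix[of z1 z2]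
      by (intro mult_mono) auto
    finally show "\<bar>\<phi> z1 * \<psi> z2 * (?P z1 z2 - ?P1 z1 * ?P2 z2)\<bar> \<le> B * B * a" .
  qed
  also have "\<dots> = real (card W) ^ 2 * B ^ 2 * a" by (simp add: power2_eq_square)
  finally show ?thesis using eq by simp
qed

lemma conc:
  fixes Z :: "'k \<Rightarrow> 'a \<Rightarrow> 'z" and \<phi> :: "'z \<Rightarrow> real" and a :: "'k \<Rightarrow> 'k \<Rightarrow> real"
  assumes P: "prob_space M" and I: "finite I" and W: "finite W"
    and ZW: "\<And>k w. k \<in> I \<Longrightarrow> w \<in> space M \<Longrightarrow> Z k w \<in> W"
    and E: "\<And>k z. k \<in> I \<Longrightarrow> {w\<in>space M. Z k w = z} \<in> sets M"
    and pB: "\<And>z. z \<in> W \<Longrightarrow> \<bar>\<phi> z\<bar> \<le> B"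
    and mix: "\<And>k l z1 z2. k \<in> I \<Longrightarrow> l \<in> I \<Longrightarrow>
       \<bar>measure M ({w\<in>space M. Z k w = z1} \<inter> {w\<in>space M. Z l w = z2})
        - measure M {w\<in>space M. Z k w = z1} * measure M {w\<in>space M. Z l w = z2}\<bar> \<le> a k l"
    and row: "\<And>k. k \<in> I \<Longrightarrow> (\<Sum>l\<in>I. a k l) \<le> R"
    and t: "t > 0"
  shows "measure M {w\<in>space M. t \<le> \<bar>\<Sum>k\<in>I. (\<phi> (Z k w) - (\<integral>w'. \<phi> (Z k w') \<partial>M))\<bar>}
     \<le> real (card I) * real (card W) ^ 2 * B ^ 2 * R / t ^ 2"
proof -
  interpret prob_space M by fact
  define X where "X k w = \<phi> (Z k w)" for k w
  define \<mu> where "\<mu> k = (\<integral>w. X k w \<partial>M)" for k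
  define Y where "Y w = (\<Sum>k\<in>I. (X k w - \<mu> k))" for w
  have measX[measurable]: "X k \<in> borel_measurable M" if "k \<in> I" for k
    unfolding X_def by (rule meas_simple[OF W]) (use that ZW E in auto)
  have bX: "\<bar>X k w\<bar> \<le> B" if "k \<in> I" "w \<in> space M" for k w
    unfolding X_def using that ZW pB by auto
  have intX: "integrable M (X k)" if "k \<in> I" for k
    by (rule integrable_const_bound[where B=B]) (use that bX measX in auto)
  have intXX: "integrable M (\<lambda>w. X k w * X l w)" if "k \<in> I" "l \<in> I" for k l
  proof (rule integrable_const_bound[where B="B*B"])
    show "AE x in M. norm (X k x * X l x) \<le> B * B"
    proof (rule AE_I2)
      fix x assume x: "x \<in> space M"
      show "norm (X k x * X l x) \<le> B * B"
        using bX[OF that(1) x] bX[OF that(2) x] by (simp add: abs_mult mult_mono order_trans[OF abs_ge_zero])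
    qed
  qed (use that measX in auto)
  have covk: "(\<integral>w. (X k w - \<mu> k) * (X l w - \<mu> l) \<partial>M) = (\<integral>w. X k w * X l w \<partial>M) - \<mu> k * \<mu> l"
    if "k \<in> I" "l \<in> I" for k l
  proof -
    have "(\<lambda>w. (X k w - \<mu> k) * (X l w - \<mu> l)) = (\<lambda>w. (X k w * X l w - \<mu> l * X k w) - (\<mu> k * X l w - \<mu> k * \<mu> l))"
      by (auto simp: algebra_simps)
    then show ?thesis
      using intX[OF that(1)] intX[OF that(2)] intXX[OF that]
      by (simp add: Bochner_Integration.integral_diff Bochner_Integration.integral_mult_right \<mu>_def
          Bochner_Integration.integrable_diff Bochner_Integration.integrable_mult_right prob_space)
  qed
  have Y2: "(Y w)\<^sup>2 = (\<Sum>k\<in>I. \<Sum>l\<in>I. (X k w - \<mu> k) * (X l w - \<mu> l))" for w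
    unfolding Y_def power2_eq_square by (simp add: sum_product)
  have intP: "integrable M (\<lambda>w. (X k w - \<mu> k) * (X l w - \<mu> l))" if "k \<in> I" "l \<in> I" for k l
  proof -
    have "(\<lambda>w. (X k w - \<mu> k) * (X l w - \<mu> l)) = (\<lambda>w. (X k w * X l w - \<mu> l * X k w) - (\<mu> k * X l w - \<mu> k * \<mu> l))"
      by (auto simp: algebra_simps)
    then show ?thesis
      using intX[OF that(1)] intX[OF that(2)] intXX[OF that]
      by (simp add: Bochner_Integration.integrable_diff Bochner_Integration.integrable_mult_right)
  qed
  have intY2: "integrable M (\<lambda>w. (Y w)\<^sup>2)"
    unfolding Y2
    by (intro Bochner_Integration.integrable_sum intP)
  have EY2: "(\<integral>w. (Y w)\<^sup>2 \<partial>M) = (\<Sum>k\<in>I. \<Sum>l\<in>I. (\<integral>w. X k w * X l w \<partial>M) - \<mu> k * \<mu> l)"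
    unfolding Y2
    apply (subst Bochner_Integration.integral_sum)
     apply (intro Bochner_Integration.integrable_sum intP; assumption)
    apply (rule sum.cong[OF refl])
    apply (subst Bochner_Integration.integral_sum)
     apply (intro intP; assumption)
    apply (rule sum.cong[OF refl])
    apply (rule covk; assumption)
    done
  have "(\<integral>w. (Y w)\<^sup>2 \<partial>M) \<le> (\<Sum>k\<in>I. \<Sum>l\<in>I. real (card W) ^ 2 * B ^ 2 * a k l)"
    unfolding EY2
  proof (intro sum_mono)
    fix k l assume kl: "k \<in> I" "l \<in> I"
    have "\<bar>(\<integral>w. X k w * X l w \<partial>M) - \<mu> k * \<mu> l\<bar> \<le> real (card W) ^ 2 * B ^ 2 * a k l"
      unfolding X_def \<mu>_def
      by (rule cov_bound[OF P W]) (use kl ZW E pB mix in auto)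
    then show "(\<integral>w. X k w * X l w \<partial>M) - \<mu> k * \<mu> l \<le> real (card W) ^ 2 * B ^ 2 * a k l" by simp
  qed
  also have "\<dots> = real (card W) ^ 2 * B ^ 2 * (\<Sum>k\<in>I. \<Sum>l\<in>I. a k l)"
    by (simp add: sum_distrib_left)
  also have "\<dots> \<le> real (card W) ^ 2 * B ^ 2 * (\<Sum>k\<in>I. R)"
    by (intro mult_left_mono sum_mono row) auto
  finally have EY2le: "(\<integral>w. (Y w)\<^sup>2 \<partial>M) \<le> real (card I) * real (card W) ^ 2 * B ^ 2 * R"
    by (simp add: mult_ac)
  have measY[measurable]: "Y \<in> borel_measurable M"
    unfolding Y_def by (intro borel_measurable_sum borel_measurable_diff measX borel_measurable_const)
  have "{w\<in>space M. t \<le> \<bar>\<Sum>k\<in>I. (\<phi> (Z k w) - (\<integral>w'. \<phi> (Z k w') \<partial>M))\<bar>} = {w\<in>space M. t\<^sup>2 \<le> (Y w)\<^sup>2}"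
    using t by (auto simp: Y_def X_def \<mu>_def abs_le_square_iff[symmetric] abs_of_pos)
  also have "measure M \<dots> \<le> (\<integral>w. (Y w)\<^sup>2 \<partial>M) / t\<^sup>2"
    by (rule integral_Markov_inequality_measure[OF intY2, where A="space M"]) (use t in auto)
  also have "\<dots> \<le> real (card I) * real (card W) ^ 2 * B ^ 2 * R / t ^ 2"
    using EY2le t by (simp add: divide_right_mono)
  finally show ?thesis .
qed

lemma int_simple:
  fixes \<phi> :: "'z \<Rightarrow> real"
  assumes "prob_space M" "finite W" "\<And>w. w \<in> space M \<Longrightarrow> Z w \<in> W" "\<And>z. {w\<in>space M. Z w = z} \<in> sets M"
  shows "integrable M (\<lambda>w. \<phi> (Z w))"
proof -
  interpret prob_space M by fact
  show ?thesis
  proof (rule integrable_const_bound[where B="\<Sum>z\<in>W. \<bar>\<phi> z\<bar>"])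
    show "AE x in M. norm (\<phi> (Z x)) \<le> (\<Sum>z\<in>W. \<bar>\<phi> z\<bar>)"
      using assms(2,3) by (intro AE_I2) (auto intro: member_le_sum[where f="\<lambda>z. \<bar>\<phi> z\<bar>"])
    show "(\<lambda>w. \<phi> (Z w)) \<in> borel_measurable M" by (rule meas_simple[OF assms(2-4)])
  qed
qed


theorem theorem1:
  fixes M :: "nat \<Rightarrow> nat \<Rightarrow> 'a measure"
    and n nplus :: "nat \<Rightarrow> nat \<Rightarrow> nat \<Rightarrow> nat \<Rightarrow> 's::finite \<Rightarrow> 'a \<Rightarrow> nat"
    and g :: "'s \<Rightarrow> 's datacube \<Rightarrow> real"
    and D :: "'s datacube \<Rightarrow> 's datacube \<Rightarrow> real"
    and b :: "nat \<Rightarrow> nat \<Rightarrow> real"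
    and p Mc :: nat
    and F :: "nat \<Rightarrow> nat \<Rightarrow> nat \<Rightarrow> nat \<Rightarrow> 'a measure"
    and dist :: "nat \<Rightarrow> nat \<Rightarrow> nat \<times> nat \<Rightarrow> nat \<times> nat \<Rightarrow> nat"
    and \<alpha> :: "nat \<Rightarrow> real"
    and \<rho> C :: real
    and s :: 's
    and hq :: "'s datacube"
  assumes p_pos: "p \<ge> 1"
    and prob: "\<And>N T. prob_space (M N T)"
    and meas_n: "\<And>N T i t s'. n N T i t s' \<in> measurable (M N T) (count_space UNIV)"
    and meas_nplus: "\<And>N T i t s'. nplus N T i t s' \<in> measurable (M N T) (count_space UNIV)"
    \<comment> \<open>n+ counts a subset of the pairs counted by n\<close>
    and nplus_le: "\<And>N T i t s' w. w \<in> space (M N T) \<Longrightarrow> nplus N T i t s' w \<le> n N T i t s' w"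
    \<comment> \<open>(A1) bounded neighbourhood sizes\<close>
    and A1: "\<And>N T i t s' w. w \<in> space (M N T) \<Longrightarrow> n N T i t s' w \<le> Mc"
    \<comment> \<open>(M)\<close>
    and g_range: "\<And>s' h. 0 \<le> g s' h \<and> g s' h \<le> 1"
    and model: "\<And>N T i t s'. (i, t) \<in> idx p N T \<Longrightarrow>
        AE w in M N T.
          real_cond_exp (M N T)
            (vimage_algebra (space (M N T))
               (\<lambda>w. (datacube (n N T) (nplus N T) i t w, n N T i (t + 1) s' w)) (count_space UNIV))
            (\<lambda>w. real (nplus N T i (t + 1) s' w)) w
          = real (n N T i (t + 1) s' w) * g s' (datacube (n N T) (nplus N T) i t w)"
    \<comment> \<open>distance D underlying the kernel\<close>
    and D_nonneg: "\<And>h h'. D h h' \<ge> 0"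
    and D_zero: "\<And>h h'. D h h' = 0 \<longleftrightarrow> h = h'"
    \<comment> \<open>(A2) bandwidth\<close>
    and b_range: "\<And>N T. 0 < b N T \<and> b N T < 1"
    and A2: "((\<lambda>(N, T). b N T) \<longlongrightarrow> 0) (NT_limit p)"
    \<comment> \<open>(A3) strong mixing w.r.t. sigma-algebras F(i,t) containing the datacube variables\<close>
    and F_sub: "\<And>N T i t. (i, t) \<in> idx p N T \<Longrightarrow> subalgebra (M N T) (F N T i t)"
    and F_h: "\<And>N T i t. (i, t) \<in> idx p N T \<Longrightarrow>
        datacube (n N T) (nplus N T) i t \<in> measurable (F N T i t) (count_space UNIV)"
    and F_n: "\<And>N T i t s'. (i, t) \<in> idx p N T \<Longrightarrow>
        n N T i (t + 1) s' \<in> measurable (F N T i t) (count_space UNIV)"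
    and F_nplus: "\<And>N T i t s'. (i, t) \<in> idx p N T \<Longrightarrow>
        nplus N T i (t + 1) s' \<in> measurable (F N T i t) (count_space UNIV)"
    and alpha_nonneg: "\<And>k. \<alpha> k \<ge> 0"
    and A3_mixing: "\<And>N T i t i' t' k A B. (i, t) \<in> idx p N T \<Longrightarrow> (i', t') \<in> idx p N T \<Longrightarrow>
        k \<ge> 1 \<Longrightarrow> dist N T (i, t) (i', t') \<ge> k \<Longrightarrow>
        A \<in> sets (F N T i t) \<Longrightarrow> B \<in> sets (F N T i' t') \<Longrightarrow>
        \<bar>measure (M N T) (A \<inter> B) - measure (M N T) A * measure (M N T) B\<bar> \<le> \<alpha> k"
    and A3_sum: "summable (\<lambda>k. \<alpha> (Suc k) * real (Suc k) powr (\<rho> - 1))"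
    \<comment> \<open>(A4) growth\<close>
    and A4_zero: "\<And>N T i t. (i, t) \<in> idx p N T \<Longrightarrow>
        real (card {(i', t') \<in> idx p N T. dist N T (i, t) (i', t') = 0}) \<le> C"
    and A4_d: "\<And>N T i t d. (i, t) \<in> idx p N T \<Longrightarrow> d \<ge> 1 \<Longrightarrow>
        real (card {(i', t') \<in> idx p N T. dist N T (i, t) (i', t') = d}) \<le> C * real d powr (\<rho> - 1)"
    \<comment> \<open>query datacube is a possible datacube\<close>
    and hq_in: "\<forall>s'. snd (hq s') \<le> fst (hq s') \<and> fst (hq s') \<le> Mc"
    \<comment> \<open>liminf of E[f_hat] positive\<close>
    and liminf_pos: "Liminf (NT_limit p)
        (\<lambda>(N, T). ereal (integral\<^sup>L (M N T) (f_hat D (b N T) p N T (n N T) (nplus N T) s hq))) > 0"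
  shows "conv_in_prob (NT_limit p) (\<lambda>(N, T). M N T)
           (\<lambda>(N, T). g_hat D (b N T) p N T (n N T) (nplus N T) s hq) (g s hq)"
proof -
  define Hset where "Hset = {h :: 's datacube. \<forall>s'. fst (h s') \<le> Mc \<and> snd (h s') \<le> Mc}"
  have finH: "finite Hset"
  proof (rule finite_subset)
    show "Hset \<subseteq> PiE UNIV (\<lambda>_. {0..Mc} \<times> {0..Mc})"
      unfolding Hset_def PiE_def by (auto simp: mem_Times_iff)
    show "finite (PiE UNIV (\<lambda>_::'s. {0..Mc} \<times> {0..Mc}))"
      by (intro finite_PiE) auto
  qed
  define W where "W = Hset \<times> {0..Mc} \<times> {0..Mc}"
  have finW: "finite W" unfolding W_def using finH by auto
  define \<delta> where "\<delta> = Min (insert 1 ((\<lambda>h. D h hq) ` (Hset - {hq})))"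
  have \<delta>pos: "\<delta> > 0"
    unfolding \<delta>_def using finH D_nonneg D_zero
    by (subst Min_gr_iff) (auto simp: order.strict_iff_order)
  have \<delta>le: "\<delta> \<le> D h hq" if "h \<in> Hset" "h \<noteq> hq" for h
    unfolding \<delta>_def using finH that by (intro Min_le) auto
  define Z where "Z N T k w = (datacube (n N T) (nplus N T) (fst k) (snd k) w,
      n N T (fst k) (snd k + 1) s w, nplus N T (fst k) (snd k + 1) s w)" for N T k w
  define \<phi>f where "\<phi>f bb z = (case z of (h, a, c) \<Rightarrow> bb powr D h hq * real a)" for bb :: real and z :: "'s datacube \<times> nat \<times> nat"
  define \<phi>v where "\<phi>v bb z = (case z of (h, a, c) \<Rightarrow> bb powr D h hq * (real c - g s hq * real a))" for bb :: real and z :: "'s datacube \<times> nat \<times> nat"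
  define S where "S = suminf (\<lambda>k. \<alpha> (Suc k) * real (Suc k) powr (\<rho> - 1))"
  define R where "R = C + C * S"
  define K0 where "K0 = 2 * real (card W) ^ 2 * real Mc ^ 2 * R"
  define a where "a N T k l = (if dist N T k l = 0 then 1 else \<alpha> (dist N T k l))" for N T k l
  have C0: "C \<ge> 0"
  proof -
    have "(1, p) \<in> idx p 1 (p + 3)" unfolding idx_def by auto
    from A4_zero[OF this] show ?thesis by (meson of_nat_0_le_iff order_trans)
  qed
  have S0: "S \<ge> 0" unfolding S_def
    by (intro suminf_nonneg A3_sum) (auto intro!: mult_nonneg_nonneg alpha_nonneg)
  have R0: "R \<ge> 0" unfolding R_def using C0 S0 by auto
  have K00: "K0 \<ge> 0" unfolding K0_def using R0 by auto
  have ZW: "Z N T k w \<in> W" if w: "w \<in> space (M N T)" for N T k w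
  proof -
    have "\<And>i t s'. n N T i t s' w \<le> Mc" using A1[OF w] .
    moreover have "\<And>i t s'. nplus N T i t s' w \<le> Mc" using A1[OF w] nplus_le[OF w] order_trans by blast
    ultimately show ?thesis unfolding Z_def W_def Hset_def datacube_def by simp
  qed
  have pow01: "0 \<le> bb powr x \<and> bb powr x \<le> 1" if "0 < bb" "bb < 1" "0 \<le> x" for bb x :: real
    using that by (auto intro: powr_le1)
  have bf: "\<bar>\<phi>f bb z\<bar> \<le> Mc" if bb: "0 < bb" "bb < 1" and z: "z \<in> W" for bb z
  proof -
    obtain h x y where zz: "z = (h, x, y)" by (cases z) auto
    have "x \<le> Mc" using z zz unfolding W_def by auto
    moreover have "0 \<le> bb powr D h hq" "bb powr D h hq \<le> 1" using pow01[OF bb D_nonneg] by auto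
    moreover have "bb powr D h hq * real x \<le> real x"
      by (rule mult_left_le_one_le) (use pow01[OF bb D_nonneg] in auto)
    ultimately show ?thesis unfolding zz \<phi>f_def by (simp add: abs_mult)
  qed
  have bv: "\<bar>\<phi>v bb z\<bar> \<le> Mc" if bb: "0 < bb" "bb < 1" and z: "z \<in> W" for bb z
  proof -
    obtain h x y where zz: "z = (h, x, y)" by (cases z) auto
    have xy: "x \<le> Mc" "y \<le> Mc" using z zz unfolding W_def by auto
    have k: "0 \<le> bb powr D h hq" "bb powr D h hq \<le> 1" using pow01[OF bb D_nonneg] by auto
    have gg: "0 \<le> g s hq" "g s hq \<le> 1" using g_range by auto
    have "\<bar>real y - g s hq * real x\<bar> \<le> Mc"
    proof -
      have "g s hq * real x \<le> Mc" using gg xy by (meson mult_left_le_one_le of_nat_0_le_iff of_nat_mono order_trans)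
      moreover have "0 \<le> g s hq * real x" using gg by simp
      ultimately show ?thesis using xy by (auto simp: abs_if)
    qed
    moreover have "bb powr D h hq * \<bar>real y - g s hq * real x\<bar> \<le> \<bar>real y - g s hq * real x\<bar>"
      by (rule mult_left_le_one_le) (use k in auto)
    ultimately show ?thesis unfolding zz \<phi>v_def using k by (simp add: abs_mult)
  qed
  have Ev: "{w\<in>space (M N T). Z N T k w = z} \<in> sets (F N T (fst k) (snd k))"
    if k: "k \<in> idx p N T" for N T k z
  proof -
    obtain i t where kk: "k = (i, t)" by (cases k) auto
    obtain h0 x0 y0 where zz: "z = (h0, x0, y0)" by (cases z) auto
    have sub: "subalgebra (M N T) (F N T i t)" using F_sub k kk by auto
    then have sp: "space (F N T i t) = space (M N T)" by (simp add: subalgebra_def)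
    have "{w\<in>space (M N T). Z N T k w = z} =
       (datacube (n N T) (nplus N T) i t -` {h0} \<inter> space (F N T i t)) \<inter>
       (n N T i (t + 1) s -` {x0} \<inter> space (F N T i t)) \<inter>
       (nplus N T i (t + 1) s -` {y0} \<inter> space (F N T i t))"
      unfolding sp Z_def kk zz by auto
    also have "\<dots> \<in> sets (F N T i t)"
      using k kk by (intro sets.Int measurable_sets[OF F_h] measurable_sets[OF F_n] measurable_sets[OF F_nplus]) auto
    finally show ?thesis unfolding kk by simp
  qed
  have EvM: "{w\<in>space (M N T). Z N T k w = z} \<in> sets (M N T)"
    if k: "k \<in> idx p N T" for N T k z
  proof -
    have "subalgebra (M N T) (F N T (fst k) (snd k))" using F_sub k by (cases k) auto
    then show ?thesis using Ev[OF k, of z] unfolding subalgebra_def by blast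
  qed
  have mixZ: "\<bar>measure (M N T) ({w\<in>space (M N T). Z N T k w = z1} \<inter> {w\<in>space (M N T). Z N T l w = z2})
        - measure (M N T) {w\<in>space (M N T). Z N T k w = z1} * measure (M N T) {w\<in>space (M N T). Z N T l w = z2}\<bar>
        \<le> a N T k l"
    if k: "k \<in> idx p N T" and l: "l \<in> idx p N T" for N T k l z1 z2
  proof (cases "dist N T k l = 0")
    case True
    interpret prob_space "M N T" by (rule prob)
    let ?A = "{w\<in>space (M N T). Z N T k w = z1}" and ?B = "{w\<in>space (M N T). Z N T l w = z2}"
    have h: "0 \<le> prob (?A \<inter> ?B)" "prob (?A \<inter> ?B) \<le> 1" "0 \<le> prob ?A" "prob ?A \<le> 1"
      "0 \<le> prob ?B" "prob ?B \<le> 1" by auto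
    have h2: "prob ?A * prob ?B \<le> 1" using h by (simp add: mult_le_one)
    have h3: "0 \<le> prob ?A * prob ?B" using h by simp
    have "\<bar>prob (?A \<inter> ?B) - prob ?A * prob ?B\<bar> \<le> 1" using h(1,2) h2 h3 by linarith
    then show ?thesis unfolding a_def using True by simp
  next
    case False
    obtain i t where kk: "k = (i, t)" by (cases k) auto
    obtain i' t' where ll: "l = (i', t')" by (cases l) auto
    show ?thesis unfolding a_def using False
      by (simp, intro A3_mixing[of i t N T i' t']) (use k l kk ll Ev[of k N T z1] Ev[of l N T z2] in auto)
  qed
  have finI: "finite (idx p N T)" for N T unfolding idx_def by auto
  have row: "(\<Sum>l\<in>idx p N T. a N T k l) \<le> R" if k: "k \<in> idx p N T" for N T k
  proof -
    obtain i t where kk: "k = (i, t)" by (cases k) auto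
    define I where "I = idx p N T"
    define Dim where "Dim = dist N T k ` I"
    define G where "G d = real (card {l\<in>I. dist N T k l = d}) * (if d = 0 then 1 else \<alpha> d)" for d
    define f where "f d = \<alpha> d * real d powr (\<rho> - 1)" for d
    have finD: "finite Dim" unfolding Dim_def I_def using finI by auto
    have G0: "G d \<ge> 0" for d unfolding G_def using alpha_nonneg by auto
    have "(\<Sum>l\<in>I. a N T k l) = (\<Sum>d\<in>Dim. \<Sum>l\<in>{l\<in>I. dist N T k l = d}. a N T k l)"
      unfolding Dim_def by (rule sum.image_gen) (simp add: I_def finI)
    also have "\<dots> = (\<Sum>d\<in>Dim. G d)"
    proof (rule sum.cong[OF refl])
      fix d assume "d \<in> Dim"
      have "(\<Sum>l\<in>{l\<in>I. dist N T k l = d}. a N T k l) = (\<Sum>l\<in>{l\<in>I. dist N T k l = d}. (if d = 0 then 1 else \<alpha> d))"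
        by (rule sum.cong) (auto simp: a_def)
      then show "(\<Sum>l\<in>{l\<in>I. dist N T k l = d}. a N T k l) = G d" by (simp add: G_def)
    qed
    also have "\<dots> \<le> (\<Sum>d\<in>insert 0 (Dim - {0}). G d)"
      by (rule sum_mono2) (use finD G0 in auto)
    also have "\<dots> = G 0 + (\<Sum>d\<in>Dim - {0}. G d)"
      using finD by (subst sum.insert) auto
    also have "\<dots> \<le> C + (\<Sum>d\<in>Dim - {0}. C * f d)"
    proof (intro add_mono sum_mono)
      have "{l\<in>I. dist N T k l = 0} = {(i', t') \<in> idx p N T. dist N T (i, t) (i', t') = 0}"
        unfolding I_def kk by auto
      then show "G 0 \<le> C" unfolding G_def using A4_zero[of i t N T] k kk by simp
    next
      fix d assume d: "d \<in> Dim - {0}"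
      have "{l\<in>I. dist N T k l = d} = {(i', t') \<in> idx p N T. dist N T (i, t) (i', t') = d}"
        unfolding I_def kk by auto
      then have "real (card {l\<in>I. dist N T k l = d}) \<le> C * real d powr (\<rho> - 1)"
        using A4_d[of i t N T d] k kk d by simp
      then have "real (card {l\<in>I. dist N T k l = d}) * \<alpha> d \<le> C * real d powr (\<rho> - 1) * \<alpha> d"
        using alpha_nonneg[of d] by (rule mult_right_mono)
      then show "G d \<le> C * f d" unfolding G_def f_def using d by (simp add: mult_ac)
    qed
    also have "\<dots> = C + C * (\<Sum>d\<in>Dim - {0}. f d)" by (simp add: sum_distrib_left)
    also have "\<dots> \<le> C + C * S"
    proof -
      define J where "J = Suc -` Dim"
      have "Dim - {0} = Suc ` J" unfolding J_def
      proof (intro equalityI subsetI)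
        fix d assume "d \<in> Dim - {0}"
        then obtain j where "d = Suc j" "Suc j \<in> Dim" by (cases d) auto
        then show "d \<in> Suc ` (Suc -` Dim)" by auto
      qed auto
      then have "(\<Sum>d\<in>Dim - {0}. f d) = (\<Sum>j\<in>J. f (Suc j))" by (simp add: sum.reindex)
      also have "\<dots> \<le> S" unfolding S_def f_def
      proof (rule sum_le_suminf[OF A3_sum])
        show "finite J" unfolding J_def using finD by (intro finite_vimageI) auto
      qed (intro mult_nonneg_nonneg alpha_nonneg; simp)
      finally show ?thesis using C0 by (simp add: mult_left_mono)
    qed
    finally show ?thesis unfolding R_def I_def .
  qed
  define m where "m N T = real N * (real T - real p - 2)" for N T
  have swap: "(\<Sum>t\<in>{p..T-2}. \<Sum>i\<in>{1..N}. H i t) = (\<Sum>k\<in>idx p N T. H (fst k) (snd k))" for N T and H :: "nat \<Rightarrow> nat \<Rightarrow> real"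
    unfolding idx_def by (subst sum.swap) (simp add: sum.cartesian_product split_beta)
  have f_rep: "f_hat D bb p N T (n N T) (nplus N T) s hq w = (1 / m N T) * (\<Sum>k\<in>idx p N T. \<phi>f bb (Z N T k w))" for bb N T w
    unfolding f_hat_def m_def swap by (simp add: \<phi>f_def Z_def kernel_def)
  have h_rep: "h_hat D bb p N T (n N T) (nplus N T) s hq w - g s hq * f_hat D bb p N T (n N T) (nplus N T) s hq w
     = (1 / m N T) * (\<Sum>k\<in>idx p N T. \<phi>v bb (Z N T k w))" for bb N T w
    unfolding f_hat_def h_hat_def m_def swap
    by (simp add: \<phi>v_def Z_def kernel_def sum_distrib_left sum_subtractf[symmetric] algebra_simps)
  have intZ: "integrable (M N T) (\<lambda>w. \<psi> (Z N T k w))" if k: "k \<in> idx p N T" for N T k and \<psi> :: "'s datacube \<times> nat \<times> nat \<Rightarrow> real"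
    by (rule int_simple[OF prob finW]) (use ZW EvM[OF k] in auto)
  have measZ: "(\<lambda>w. \<psi> (Z N T k w)) \<in> borel_measurable (M N T)" if k: "k \<in> idx p N T" for N T k and \<psi> :: "'s datacube \<times> nat \<times> nat \<Rightarrow> real"
    by (rule meas_simple[OF finW]) (use ZW EvM[OF k] in auto)
  have condexp: "(\<integral>w. b N T powr D (fst (Z N T k w)) hq * real (snd (snd (Z N T k w))) \<partial>M N T)
     = (\<integral>w. b N T powr D (fst (Z N T k w)) hq * (real (fst (snd (Z N T k w))) * g s (fst (Z N T k w))) \<partial>M N T)"
    if k: "k \<in> idx p N T" for N T k
  proof -
    obtain i t where kk: "k = (i, t)" by (cases k) auto
    let ?M = "M N T"
    define \<pi> where "\<pi> w = (datacube (n N T) (nplus N T) i t w, n N T i (t + 1) s w)" for w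
    define G where "G = vimage_algebra (space ?M) \<pi> (count_space UNIV)"
    interpret P: prob_space ?M by (rule prob)
    have subF: "subalgebra ?M (F N T i t)" using F_sub k kk by auto
    have dcM: "datacube (n N T) (nplus N T) i t \<in> measurable ?M (count_space UNIV)"
      using measurable_from_subalg[OF subF F_h] k kk by auto
    have \<pi>M: "\<pi> \<in> measurable ?M (count_space UNIV)"
    proof (subst measurable_count_space_eq2_countable, intro conjI ballI)
      fix x :: "'s datacube \<times> nat"
      have "\<pi> -` {x} \<inter> space ?M = (datacube (n N T) (nplus N T) i t -` {fst x} \<inter> space ?M) \<inter>
          (n N T i (t + 1) s -` {snd x} \<inter> space ?M)"
        unfolding \<pi>_def by (cases x) auto
      also have "\<dots> \<in> sets ?M"
        by (intro sets.Int measurable_sets[OF dcM] measurable_sets[OF meas_n]) auto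
      finally show "\<pi> -` {x} \<inter> space ?M \<in> sets ?M" .
    qed auto
    have subG: "subalgebra ?M G"
      unfolding subalgebra_def G_def using measurable_iff_sets[THEN iffD1, OF \<pi>M] by simp
    interpret FS: finite_measure_subalgebra ?M G
      by unfold_locales (rule subG)
    define fK where "fK w = b N T powr D (fst (\<pi> w)) hq" for w
    have fKG: "fK \<in> borel_measurable G"
    proof -
      have "\<pi> \<in> measurable G (count_space UNIV)" unfolding G_def by (rule measurable_vimage_algebra1) auto
      moreover have "(\<lambda>x. b N T powr D (fst x) hq) \<in> borel_measurable (count_space UNIV)" by simp
      ultimately show ?thesis unfolding fK_def by (rule measurable_compose)
    qed
    have eqfK: "fK w = b N T powr D (fst (Z N T k w)) hq" for w unfolding fK_def \<pi>_def Z_def kk by simp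
    have intprod: "integrable ?M (\<lambda>w. fK w * real (nplus N T i (t + 1) s w))"
      using intZ[OF k, of "\<lambda>z. b N T powr D (fst z) hq * real (snd (snd z))"] unfolding eqfK Z_def kk by simp
    have npM: "(\<lambda>w. real (nplus N T i (t + 1) s w)) \<in> borel_measurable ?M"
      using meas_nplus by (intro measurable_compose[OF meas_nplus]) auto
    have I1: "(\<integral>w. fK w * real_cond_exp ?M G (\<lambda>w. real (nplus N T i (t + 1) s w)) w \<partial>?M)
        = (\<integral>w. fK w * real (nplus N T i (t + 1) s w) \<partial>?M)"
      by (rule FS.real_cond_exp_intg(2)[OF intprod fKG npM])
    have fKM: "fK \<in> borel_measurable ?M" using measurable_from_subalg[OF subG fKG] .
    have I2: "(\<integral>w. fK w * real_cond_exp ?M G (\<lambda>w. real (nplus N T i (t + 1) s w)) w \<partial>?M)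
        = (\<integral>w. fK w * (real (n N T i (t + 1) s w) * g s (datacube (n N T) (nplus N T) i t w)) \<partial>?M)"
    proof (rule integral_cong_AE)
      show "(\<lambda>w. fK w * real_cond_exp ?M G (\<lambda>w. real (nplus N T i (t + 1) s w)) w) \<in> borel_measurable ?M"
        using fKM borel_measurable_cond_exp2 by measurable
      show "(\<lambda>w. fK w * (real (n N T i (t + 1) s w) * g s (datacube (n N T) (nplus N T) i t w))) \<in> borel_measurable ?M"
        using measZ[OF k, of "\<lambda>z. b N T powr D (fst z) hq * (real (fst (snd z)) * g s (fst z))"] unfolding eqfK Z_def kk by simp
      show "AE w in ?M. fK w * real_cond_exp ?M G (\<lambda>w. real (nplus N T i (t + 1) s w)) w
          = fK w * (real (n N T i (t + 1) s w) * g s (datacube (n N T) (nplus N T) i t w))"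
        using model[of i t N T s] k kk unfolding G_def \<pi>_def by auto
    qed
    show ?thesis using I1 I2 unfolding eqfK by (simp add: Z_def kk)
  qed
  have bias: "\<bar>\<integral>w. \<phi>v (b N T) (Z N T k w) \<partial>M N T\<bar> \<le> Mc * b N T powr \<delta>" if k: "k \<in> idx p N T" for N T k
  proof -
    interpret P: prob_space "M N T" by (rule prob)
    define bb where "bb = b N T"
    define \<psi>1 where "\<psi>1 z = bb powr D (fst z) hq * real (snd (snd z))" for z :: "'s datacube \<times> nat \<times> nat"
    define \<psi>2 where "\<psi>2 z = bb powr D (fst z) hq * (real (fst (snd z)) * g s (fst z))" for z :: "'s datacube \<times> nat \<times> nat"
    define \<psi>3 where "\<psi>3 z = bb powr D (fst z) hq * real (fst (snd z)) * (g s (fst z) - g s hq)" for z :: "'s datacube \<times> nat \<times> nat"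
    have "(\<integral>w. \<phi>v bb (Z N T k w) \<partial>M N T) = (\<integral>w. \<psi>1 (Z N T k w) - g s hq * \<phi>f bb (Z N T k w) \<partial>M N T)"
      by (rule Bochner_Integration.integral_cong[OF refl]) (auto simp: \<phi>v_def \<phi>f_def \<psi>1_def split: prod.splits simp: algebra_simps)
    also have "\<dots> = (\<integral>w. \<psi>1 (Z N T k w) \<partial>M N T) - g s hq * (\<integral>w. \<phi>f bb (Z N T k w) \<partial>M N T)"
      using intZ[OF k] by simp
    also have "(\<integral>w. \<psi>1 (Z N T k w) \<partial>M N T) = (\<integral>w. \<psi>2 (Z N T k w) \<partial>M N T)"
      unfolding \<psi>1_def \<psi>2_def bb_def by (rule condexp[OF k])
    also have "(\<integral>w. \<psi>2 (Z N T k w) \<partial>M N T) - g s hq * (\<integral>w. \<phi>f bb (Z N T k w) \<partial>M N T)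
       = (\<integral>w. \<psi>2 (Z N T k w) - g s hq * \<phi>f bb (Z N T k w) \<partial>M N T)"
      using intZ[OF k] by simp
    also have "\<dots> = (\<integral>w. \<psi>3 (Z N T k w) \<partial>M N T)"
      by (rule Bochner_Integration.integral_cong[OF refl]) (auto simp: \<psi>3_def \<phi>f_def \<psi>2_def split: prod.splits simp: algebra_simps)
    finally have eq: "(\<integral>w. \<phi>v bb (Z N T k w) \<partial>M N T) = (\<integral>w. \<psi>3 (Z N T k w) \<partial>M N T)" .
    have bnd: "\<bar>\<psi>3 z\<bar> \<le> Mc * bb powr \<delta>" if z: "z \<in> W" for z
    proof -
      obtain h x y where zz: "z = (h, x, y)" by (cases z) auto
      have hH: "h \<in> Hset" and x: "x \<le> Mc" using z zz unfolding W_def by auto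
      have bb: "0 < bb" "bb < 1" using b_range unfolding bb_def by auto
      show ?thesis
      proof (cases "h = hq")
        case True
        then show ?thesis unfolding zz \<psi>3_def using bb by simp
      next
        case False
        have K: "bb powr D h hq \<le> bb powr \<delta>" using powr_mono'[OF \<delta>le[OF hH False], of bb] bb by simp
        have K0: "0 \<le> bb powr D h hq" by simp
        have gd: "\<bar>g s h - g s hq\<bar> \<le> 1" using g_range[of s h] g_range[of s hq] by (simp add: abs_le_iff)
        have "\<bar>\<psi>3 z\<bar> = bb powr D h hq * real x * \<bar>g s h - g s hq\<bar>" unfolding zz \<psi>3_def by (simp add: abs_mult)
        also have "\<dots> \<le> bb powr \<delta> * real Mc * 1"
          using K K0 x gd by (intro mult_mono) auto
        finally show ?thesis by (simp add: mult.commute)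
      qed
    qed
    have "(\<integral>w. \<psi>3 (Z N T k w) \<partial>M N T) \<le> Mc * bb powr \<delta>"
    proof (rule P.integral_le_const[OF intZ[OF k]], rule AE_I2)
      fix w assume w: "w \<in> space (M N T)"
      have "\<bar>\<psi>3 (Z N T k w)\<bar> \<le> Mc * bb powr \<delta>" using bnd[OF ZW[OF w]] .
      then show "\<psi>3 (Z N T k w) \<le> Mc * bb powr \<delta>" by linarith
    qed
    moreover have "- (Mc * bb powr \<delta>) \<le> (\<integral>w. \<psi>3 (Z N T k w) \<partial>M N T)"
    proof (rule P.integral_ge_const[OF intZ[OF k]], rule AE_I2)
      fix w assume w: "w \<in> space (M N T)"
      have "\<bar>\<psi>3 (Z N T k w)\<bar> \<le> Mc * bb powr \<delta>" using bnd[OF ZW[OF w]] .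
      then show "- (Mc * bb powr \<delta>) \<le> \<psi>3 (Z N T k w)" by linarith
    qed
    ultimately show ?thesis using eq unfolding bb_def by simp
  qed
  define K1 where "K1 = real (card W) ^ 2 * real Mc ^ 2 * R"
  have concZ: "measure (M N T) {w\<in>space (M N T). t \<le> \<bar>\<Sum>k\<in>idx p N T. (\<psi> (Z N T k w) - (\<integral>w'. \<psi> (Z N T k w') \<partial>M N T))\<bar>}
      \<le> real (card (idx p N T)) * K1 / t ^ 2"
    if \<psi>B: "\<And>z. z \<in> W \<Longrightarrow> \<bar>\<psi> z\<bar> \<le> Mc" and t: "t > 0" for N T and \<psi> :: "'s datacube \<times> nat \<times> nat \<Rightarrow> real" and t :: real
    using conc[OF prob[of N T] finI[of N T] finW, where Z="Z N T" and \<phi>=\<psi> and B=Mc and a="a N T" and R=R and t=t] ZW EvM \<psi>B mixZ row t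
    unfolding K1_def by (auto simp: mult_ac)
  have cardI: "real (card (idx p N T)) \<le> 2 * m N T" if T: "p + 2 < T" for N T
  proof -
    have "card (idx p N T) = N * (T - 1 - p)" unfolding idx_def using T by (simp add: card_cartesian_product)
    then have "real (card (idx p N T)) = real N * (real T - 1 - real p)" using T by (simp add: of_nat_diff)
    also have "\<dots> \<le> real N * (2 * (real T - real p - 2))" using T by (intro mult_left_mono) auto
    finally show ?thesis unfolding m_def by (simp add: algebra_simps)
  qed
  have key: "measure (M N T) {w\<in>space (M N T). e < \<bar>g_hat D (b N T) p N T (n N T) (nplus N T) s hq w - g s hq\<bar>}
      \<le> 2 * K1 / (m N T * c ^ 2) + 2 * K1 / (m N T * (e * c / 2) ^ 2)"
    if T: "p + 2 < T" and N: "1 \<le> N" and e: "e > 0" and c: "c > 0"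
      and Ef: "2 * c \<le> (\<integral>w. f_hat D (b N T) p N T (n N T) (nplus N T) s hq w \<partial>M N T)"
      and bsmall: "2 * Mc * b N T powr \<delta> \<le> e * c / 2"
    for N T e c
  proof -
    interpret P: prob_space "M N T" by (rule prob)
    let ?I = "idx p N T"
    let ?M = "M N T"
    define bb where "bb = b N T"
    have bb: "0 < bb" "bb < 1" using b_range unfolding bb_def by auto
    have mpos: "m N T > 0" unfolding m_def using T N by auto
    define fh where "fh w = f_hat D bb p N T (n N T) (nplus N T) s hq w" for w
    define hh where "hh w = h_hat D bb p N T (n N T) (nplus N T) s hq w" for w
    define Sf where "Sf w = (\<Sum>k\<in>?I. (\<phi>f bb (Z N T k w) - (\<integral>w'. \<phi>f bb (Z N T k w') \<partial>?M)))" for w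
    define Sv where "Sv w = (\<Sum>k\<in>?I. (\<phi>v bb (Z N T k w) - (\<integral>w'. \<phi>v bb (Z N T k w') \<partial>?M)))" for w
    define Ef where "Ef = (\<integral>w. fh w \<partial>?M)"
    define EQ where "EQ = (1 / m N T) * (\<Sum>k\<in>?I. (\<integral>w'. \<phi>v bb (Z N T k w') \<partial>?M))"
    have Ef_eq: "Ef = (1 / m N T) * (\<Sum>k\<in>?I. (\<integral>w'. \<phi>f bb (Z N T k w') \<partial>?M))"
      unfolding Ef_def fh_def f_rep
      by (simp add: Bochner_Integration.integral_sum intZ)
    have fdev: "fh w - Ef = (1 / m N T) * Sf w" for w
      unfolding fh_def f_rep Ef_eq Sf_def by (simp add: sum_subtractf right_diff_distrib)
    have qdev: "(hh w - g s hq * fh w) - EQ = (1 / m N T) * Sv w" for w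
      unfolding hh_def fh_def h_rep EQ_def Sv_def by (simp add: sum_subtractf right_diff_distrib)
    have EQb: "\<bar>EQ\<bar> \<le> e * c / 2"
    proof -
      have "\<bar>\<Sum>k\<in>?I. (\<integral>w'. \<phi>v bb (Z N T k w') \<partial>?M)\<bar> \<le> (\<Sum>k\<in>?I. Mc * bb powr \<delta>)"
        using bias unfolding bb_def by (intro order.trans[OF sum_abs] sum_mono) auto
      also have "\<dots> = real (card ?I) * (Mc * bb powr \<delta>)" by simp
      also have "\<dots> \<le> 2 * m N T * (Mc * bb powr \<delta>)" using cardI[OF T] bb by (intro mult_right_mono) auto
      finally have "\<bar>EQ\<bar> \<le> 2 * (Mc * bb powr \<delta>)"
        unfolding EQ_def using mpos by (simp add: abs_mult field_simps)
      then show ?thesis using bsmall unfolding bb_def by simp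
    qed
    have measSf: "Sf \<in> borel_measurable ?M" unfolding Sf_def
      by (intro borel_measurable_sum borel_measurable_diff borel_measurable_const measZ) auto
    have measSv: "Sv \<in> borel_measurable ?M" unfolding Sv_def
      by (intro borel_measurable_sum borel_measurable_diff borel_measurable_const measZ) auto
    define A where "A = {w\<in>space ?M. m N T * c \<le> \<bar>Sf w\<bar>}"
    define B where "B = {w\<in>space ?M. m N T * (e * c / 2) \<le> \<bar>Sv w\<bar>}"
    have AM: "A \<in> sets ?M" unfolding A_def using measSf by measurable
    have BM: "B \<in> sets ?M" unfolding B_def using measSv by measurable
    have incl: "{w\<in>space ?M. e < \<bar>g_hat D (b N T) p N T (n N T) (nplus N T) s hq w - g s hq\<bar>} \<subseteq> A \<union> B"
    proof (rule subsetI, rule ccontr)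
      fix w assume w: "w \<in> {w\<in>space ?M. e < \<bar>g_hat D (b N T) p N T (n N T) (nplus N T) s hq w - g s hq\<bar>}"
        and nAB: "w \<notin> A \<union> B"
      have w1: "\<bar>Sf w\<bar> < m N T * c" "\<bar>Sv w\<bar> < m N T * (e * c / 2)" using w nAB unfolding A_def B_def by auto
      have f1: "\<bar>fh w - Ef\<bar> < c" unfolding fdev using w1 mpos by (simp add: abs_mult field_simps)
      have q1: "\<bar>(hh w - g s hq * fh w) - EQ\<bar> < e * c / 2" unfolding qdev using w1 mpos by (simp add: abs_mult field_simps)
      have Efc: "2 * c \<le> Ef" using Ef unfolding Ef_def fh_def bb_def .
      have fpos: "fh w > c" using f1 Efc by linarith
      have q2: "\<bar>hh w - g s hq * fh w\<bar> < e * c" using q1 EQb by linarith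
      have "\<bar>g_hat D (b N T) p N T (n N T) (nplus N T) s hq w - g s hq\<bar> = \<bar>hh w - g s hq * fh w\<bar> / fh w"
        unfolding g_hat_def hh_def fh_def bb_def using fpos c
        by (simp add: fh_def bb_def field_simps abs_div)
      also have "\<dots> \<le> e"
        using q2 fpos c e by (simp add: divide_le_eq) (smt (verit) mult_strict_left_mono)
      finally show False using w by simp
    qed
    have "measure ?M {w\<in>space ?M. e < \<bar>g_hat D (b N T) p N T (n N T) (nplus N T) s hq w - g s hq\<bar>}
        \<le> measure ?M (A \<union> B)"
      by (rule P.finite_measure_mono[OF incl]) (use AM BM in auto)
    also have "\<dots> \<le> measure ?M A + measure ?M B" by (rule measure_Un_le[OF AM BM])
    also have "measure ?M A \<le> real (card ?I) * K1 / (m N T * c) ^ 2"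
      unfolding A_def Sf_def by (rule concZ) (use bf[OF bb] mpos c in auto)
    also have "measure ?M B \<le> real (card ?I) * K1 / (m N T * (e * c / 2)) ^ 2"
      unfolding B_def Sv_def by (rule concZ) (use bv[OF bb] mpos c e in auto)
    also have "real (card ?I) * K1 / (m N T * c) ^ 2 \<le> 2 * K1 / (m N T * c ^ 2)"
    proof -
      have K10: "K1 \<ge> 0" unfolding K1_def using R0 by simp
      have "real (card ?I) * K1 / (m N T * c) ^ 2 \<le> 2 * m N T * K1 / (m N T * c) ^ 2"
        using cardI[OF T] K10 by (intro divide_right_mono mult_right_mono) auto
      also have "\<dots> = 2 * K1 / (m N T * c ^ 2)" using mpos c by (simp add: power2_eq_square field_simps)
      finally show ?thesis .
    qed
    also have "real (card ?I) * K1 / (m N T * (e * c / 2)) ^ 2 \<le> 2 * K1 / (m N T * (e * c / 2) ^ 2)"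
    proof -
      have K10: "K1 \<ge> 0" unfolding K1_def using R0 by simp
      have "real (card ?I) * K1 / (m N T * (e * c / 2)) ^ 2 \<le> 2 * m N T * K1 / (m N T * (e * c / 2)) ^ 2"
        using cardI[OF T] K10 by (intro divide_right_mono mult_right_mono) auto
      also have "\<dots> = 2 * K1 / (m N T * (e * c / 2) ^ 2)" using mpos c e by (simp add: power2_eq_square field_simps)
      finally show ?thesis .
    qed
    finally show ?thesis by simp
  qed
  have evNT: "eventually (\<lambda>x. K \<le> fst x * snd x \<and> p + 2 < snd x) (NT_limit p)" for K
    unfolding NT_limit_def eventually_inf_principal eventually_filtercomap
    by (rule exI[of _ "\<lambda>y. K \<le> y"]) (auto simp: eventually_ge_at_top)
  have mlow: "real N * real T \<le> m N T * (real p + 3)" if "p + 2 < T" for N T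
  proof -
    have "(real T - real p - 2) * (real p + 3) - real T = (real p + 2) * (real T - real p - 3)"
      by (simp add: algebra_simps)
    also have "\<dots> \<ge> 0" using that by auto
    finally have "real T \<le> (real T - real p - 2) * (real p + 3)" by simp
    then have "real N * real T \<le> real N * ((real T - real p - 2) * (real p + 3))"
      by (intro mult_left_mono) auto
    then show ?thesis unfolding m_def by (simp add: mult_ac)
  qed
  obtain c0 where c0: "0 < ereal c0" "ereal c0 < Liminf (NT_limit p)
        (\<lambda>(N, T). ereal (integral\<^sup>L (M N T) (f_hat D (b N T) p N T (n N T) (nplus N T) s hq)))"
    using ereal_dense2[OF liminf_pos] by blast
  define c where "c = c0 / 2"
  have cpos: "c > 0" unfolding c_def using c0(1) by simp
  have evEf: "eventually (\<lambda>x. 2 * c \<le> (\<integral>w. f_hat D (b (fst x) (snd x)) p (fst x) (snd x) (n (fst x) (snd x)) (nplus (fst x) (snd x)) s hq w \<partial>M (fst x) (snd x))) (NT_limit p)"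
    using less_LiminfD[OF c0(2)] by eventually_elim (auto simp: c_def split: prod.splits)
  show ?thesis
    unfolding conv_in_prob_def
  proof (intro allI impI)
    fix e :: real assume e: "e > 0"
    define \<eta> where "\<eta> = (e * c / (4 * Mc + 1)) powr (1 / \<delta>)"
    have \<eta>pos: "\<eta> > 0" unfolding \<eta>_def using e cpos by simp
    have evb: "eventually (\<lambda>x. b (fst x) (snd x) < \<eta>) (NT_limit p)"
      using order_tendstoD(2)[OF A2 \<eta>pos] by (simp add: split_beta)
    have bsm: "2 * Mc * b N T powr \<delta> \<le> e * c / 2" if "b N T < \<eta>" for N T
    proof -
      have "b N T powr \<delta> \<le> \<eta> powr \<delta>"
        using that b_range[of N T] \<delta>pos by (intro powr_mono2) auto
      also have "\<eta> powr \<delta> = e * c / (4 * Mc + 1)"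
        unfolding \<eta>_def using \<delta>pos e cpos by (simp add: powr_powr)
      finally have "2 * Mc * b N T powr \<delta> \<le> 2 * Mc * (e * c / (4 * Mc + 1))"
        by (intro mult_left_mono) auto
      also have "\<dots> \<le> e * c / 2" using e cpos by (simp add: field_simps)
      finally show ?thesis .
    qed
    define K2 where "K2 = 2 * K1 / c ^ 2 + 2 * K1 / (e * c / 2) ^ 2"
    have K10: "K1 \<ge> 0" unfolding K1_def using R0 by simp
    have K20: "K2 \<ge> 0" unfolding K2_def using K10 by auto
    show "((\<lambda>x. measure ((\<lambda>(N, T). M N T) x) {w \<in> space ((\<lambda>(N, T). M N T) x).
              e < \<bar>(\<lambda>(N, T). g_hat D (b N T) p N T (n N T) (nplus N T) s hq) x w - g s hq\<bar>}) \<longlongrightarrow> 0) (NT_limit p)"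
    proof (rule order_tendstoI)
      fix y :: real assume "y < 0"
      then show "eventually (\<lambda>x. y < measure ((\<lambda>(N, T). M N T) x) {w \<in> space ((\<lambda>(N, T). M N T) x).
              e < \<bar>(\<lambda>(N, T). g_hat D (b N T) p N T (n N T) (nplus N T) s hq) x w - g s hq\<bar>}) (NT_limit p)"
        by (intro always_eventually allI) (auto simp: split_beta intro: less_le_trans[OF _ measure_nonneg])
    next
      fix y :: real assume y: "y > 0"
      define L where "L = nat \<lceil>(real p + 3) * K2 / y\<rceil> + 1"
      show "eventually (\<lambda>x. measure ((\<lambda>(N, T). M N T) x) {w \<in> space ((\<lambda>(N, T). M N T) x).
              e < \<bar>(\<lambda>(N, T). g_hat D (b N T) p N T (n N T) (nplus N T) s hq) x w - g s hq\<bar>} < y) (NT_limit p)"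
        using evNT[of L] evEf evb
      proof eventually_elim
        case (elim x)
        obtain N T where x: "x = (N, T)" by (cases x) auto
        have T: "p + 2 < T" and NT: "L \<le> N * T" using elim x by auto
        have N: "1 \<le> N" using NT unfolding L_def by (cases N) auto
        have mpos: "m N T > 0" unfolding m_def using T N by auto
        have k: "measure (M N T) {w\<in>space (M N T). e < \<bar>g_hat D (b N T) p N T (n N T) (nplus N T) s hq w - g s hq\<bar>}
           \<le> 2 * K1 / (m N T * c ^ 2) + 2 * K1 / (m N T * (e * c / 2) ^ 2)"
          by (rule key[OF T N e cpos]) (use elim x bsm in auto)
        also have "\<dots> = K2 / m N T" unfolding K2_def using mpos cpos e by (simp add: field_simps)
        also have "\<dots> < y"
        proof -
          have "(real p + 3) * K2 / y < real L" unfolding L_def by linarith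
          also have "real L \<le> real N * real T" using NT by (metis of_nat_mono of_nat_mult)
          also have "\<dots> \<le> m N T * (real p + 3)" by (rule mlow[OF T])
          finally have "(real p + 3) * K2 / y < m N T * (real p + 3)" .
          then have "(real p + 3) * (K2 / y) < (real p + 3) * m N T" by (simp add: mult.commute)
          then have "(real p + 3) * (K2 / y) < (real p + 3) * m N T" by (simp add: times_divide_eq_right)
          then have "K2 / y < m N T" by (rule mult_less_cancel_left_pos[THEN iffD1, rotated]) simp
          then show ?thesis using y mpos by (simp add: field_simps)
        qed
        finally show ?case unfolding x by simp
      qed
    qed
  qed
qed

end
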